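(* Let $\mathcal{A}$ and $\mathcal{B}$ be saturated fusion systems over finite $p$-groups $D$ and $E$, and let $\phi:E\to D$ be a group isomorphism inducing an isomorphism of fusion systems $\mathcal{B}\to\mathcal{A}$. Let $Q\le E$, $P=\phi(Q)$, $u\in N_D(P)$, $v\in N_E(Q)$, and suppose there exist an $\mathcal{A}$-isomorphism $\alpha:P\langle u\rangle\to\alpha(P\langle u\rangle)$ and a $\mathcal{B}$-isomorphism $\beta:Q\langle v\rangle\to\beta(Q\langle v\rangle)$ with $\alpha|_P=\phi\beta\phi^{-1}|_P$ and $\alpha(u)=\phi(\beta(v))$. Then (1) there is an $\mathcal{A}$-isomorphism $\psi:P\langle u\rangle\to P\langle\phi(v)\rangle$ with $\psi|_P=\mathrm{id}_P$ and $\psi(u)=\phi(v)$; in particular $u$ and $\phi(v)$ are $\mathcal{N}_\mathcal{A}(P)$-conjugate; (2) there is a $\mathcal{B}$-isomorphism $\omega:Q\langle v\rangle\to Q\langle\phi^{-1}(u)\rangle$ with $\omega|_Q=\mathrm{id}_Q$ and $\omega(v)=\phi^{-1}(u)$; in particular $v$ and $\phi^{-1}(u)$ are $\mathcal{N}_\mathcal{B}(Q)$-conjugate.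
   Context: $\phi$ induces an isomorphism $\mathcal{B}\to\mathcal{A}$ means $\mathrm{Hom}_\mathcal{A}(\phi(R),\phi(S))=\phi\circ\mathrm{Hom}_\mathcal{B}(R,S)\circ\phi^{-1}$ for all $R,S\le E$. $\mathcal{N}_\mathcal{A}(P)$ is the normalizer subsystem of $P$ in $\mathcal{A}$; elements $x,y$ are $\mathcal{F}$-conjugate if some $\mathcal{F}$-isomorphism $\langle x\rangle\to\langle y\rangle$ sends $x$ to $y$. *)

theory Defs
  imports "HOL-Algebra.Algebra" "HOL-Computational_Algebra.Primes"
begin

text \<open>A fusion system over a group G is represented by its Hom-sets:
  F P Q is the set of F-morphisms from P to Q. Morphisms are functions
  that are extensional on their domain (undefined outside P).\<close>

type_synonym 'a fusion = "'a set \<Rightarrow> 'a set \<Rightarrow> ('a \<Rightarrow> 'a) set"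

definition finite_p_group :: "nat \<Rightarrow> ('a, 'm) monoid_scheme \<Rightarrow> bool" where
  "finite_p_group p G \<longleftrightarrow> group G \<and> Factorial_Ring.prime p \<and> finite (carrier G)
     \<and> (\<exists>n. card (carrier G) = p ^ n)"

definition conj_map :: "('a, 'm) monoid_scheme \<Rightarrow> 'a \<Rightarrow> 'a set \<Rightarrow> ('a \<Rightarrow> 'a)" where
  "conj_map G g P = restrict (\<lambda>x. g \<otimes>\<^bsub>G\<^esub> x \<otimes>\<^bsub>G\<^esub> inv\<^bsub>G\<^esub> g) P"

definition hom_conj :: "('a, 'm) monoid_scheme \<Rightarrow> 'a fusion" where
  "hom_conj G P Q = {conj_map G g P | g. g \<in> carrier G
      \<and> (\<lambda>x. g \<otimes>\<^bsub>G\<^esub> x \<otimes>\<^bsub>G\<^esub> inv\<^bsub>G\<^esub> g) ` P \<subseteq> Q}"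

definition inj_homs :: "('a, 'm) monoid_scheme \<Rightarrow> 'a fusion" where
  "inj_homs G P Q = {f. f \<in> extensional P
      \<and> f \<in> hom (G\<lparr>carrier := P\<rparr>) (G\<lparr>carrier := Q\<rparr>) \<and> inj_on f P}"

definition fusion_system :: "('a, 'm) monoid_scheme \<Rightarrow> 'a fusion \<Rightarrow> bool" where
  "fusion_system G F \<longleftrightarrow>
     (\<forall>P Q. \<not> (subgroup P G \<and> subgroup Q G) \<longrightarrow> F P Q = {}) \<and>
     (\<forall>P Q. subgroup P G \<and> subgroup Q G \<longrightarrow>
        hom_conj G P Q \<subseteq> F P Q \<and> F P Q \<subseteq> inj_homs G P Q) \<and>
     (\<forall>P Q R f g. f \<in> F P Q \<longrightarrow> g \<in> F Q R \<longrightarrow> restrict (g \<circ> f) P \<in> F P R) \<and>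
     (\<forall>P Q f. f \<in> F P Q \<longrightarrow>
        f \<in> F P (f ` P) \<and> restrict (inv_into P f) (f ` P) \<in> F (f ` P) P)"

definition centralizer_grp :: "('a, 'm) monoid_scheme \<Rightarrow> 'a set \<Rightarrow> 'a set" where
  "centralizer_grp G P = {g \<in> carrier G. \<forall>x\<in>P. g \<otimes>\<^bsub>G\<^esub> x = x \<otimes>\<^bsub>G\<^esub> g}"

definition fully_normalized :: "('a, 'm) monoid_scheme \<Rightarrow> 'a fusion \<Rightarrow> 'a set \<Rightarrow> bool" where
  "fully_normalized G F P \<longleftrightarrow> subgroup P G \<and>
     (\<forall>f \<in> F P (carrier G). card (normalizer G (f ` P)) \<le> card (normalizer G P))"

definition fully_centralized :: "('a, 'm) monoid_scheme \<Rightarrow> 'a fusion \<Rightarrow> 'a set \<Rightarrow> bool" where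
  "fully_centralized G F P \<longleftrightarrow> subgroup P G \<and>
     (\<forall>f \<in> F P (carrier G). card (centralizer_grp G (f ` P)) \<le> card (centralizer_grp G P))"

definition ext_group :: "('a, 'm) monoid_scheme \<Rightarrow> 'a set \<Rightarrow> ('a \<Rightarrow> 'a) \<Rightarrow> 'a set" where
  "ext_group G P f = {g \<in> normalizer G P. \<exists>h \<in> normalizer G (f ` P).
      \<forall>y \<in> f ` P. f (g \<otimes>\<^bsub>G\<^esub> inv_into P f y \<otimes>\<^bsub>G\<^esub> inv\<^bsub>G\<^esub> g)
                   = h \<otimes>\<^bsub>G\<^esub> y \<otimes>\<^bsub>G\<^esub> inv\<^bsub>G\<^esub> h}"

text \<open>Saturation (Broto--Levi--Oliver): (I) every fully normalized P is fully
  centralized and Aut_G(P) is a Sylow p-subgroup of Aut_F(P) (index prime to p);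
  (II) the extension axiom.\<close>
definition saturated_fusion_system :: "nat \<Rightarrow> ('a, 'm) monoid_scheme \<Rightarrow> 'a fusion \<Rightarrow> bool" where
  "saturated_fusion_system p G F \<longleftrightarrow> finite_p_group p G \<and> fusion_system G F \<and>
     (\<forall>P. fully_normalized G F P \<longrightarrow> fully_centralized G F P \<and>
          \<not> p dvd (card (F P P) div card (hom_conj G P P))) \<and>
     (\<forall>P f. subgroup P G \<longrightarrow> f \<in> F P (carrier G) \<longrightarrow> fully_centralized G F (f ` P) \<longrightarrow>
          (\<exists>g \<in> F (ext_group G P f) (carrier G). \<forall>x\<in>P. g x = f x))"

definition induces_fusion_iso ::
  "('b, 'n) monoid_scheme \<Rightarrow> ('a, 'm) monoid_scheme \<Rightarrow> ('b \<Rightarrow> 'a) \<Rightarrow> 'b fusion \<Rightarrow> 'a fusion \<Rightarrow> bool" where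
  "induces_fusion_iso E D \<phi> B A \<longleftrightarrow> \<phi> \<in> iso E D \<and>
     (\<forall>R S. subgroup R E \<longrightarrow> subgroup S E \<longrightarrow>
        A (\<phi> ` R) (\<phi> ` S) =
          {restrict (\<phi> \<circ> f \<circ> inv_into (carrier E) \<phi>) (\<phi> ` R) | f. f \<in> B R S})"

definition normalizer_subsystem :: "('a, 'm) monoid_scheme \<Rightarrow> 'a fusion \<Rightarrow> 'a set \<Rightarrow> 'a fusion" where
  "normalizer_subsystem G F P R S = {f \<in> F R S. R \<subseteq> normalizer G P \<and> S \<subseteq> normalizer G P \<and>
      (\<exists>\<psi> \<in> F (generate G (P \<union> R)) (generate G (P \<union> S)).
          \<psi> ` P = P \<and> (\<forall>x\<in>R. \<psi> x = f x))}"

definition fusion_conjugate :: "('a, 'm) monoid_scheme \<Rightarrow> 'a fusion \<Rightarrow> 'a \<Rightarrow> 'a \<Rightarrow> bool" where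
  "fusion_conjugate G F x y \<longleftrightarrow>
     (\<exists>f \<in> F (generate G {x}) (generate G {y}).
        f ` generate G {x} = generate G {y} \<and> f x = y)"

end

theory Submission imports Defs begin
lemma normalizer_char:
  assumes "group G" "subgroup H G"
  shows "normalizer G H = {g \<in> carrier G. (\<lambda>h. g \<otimes>\<^bsub>G\<^esub> h \<otimes>\<^bsub>G\<^esub> inv\<^bsub>G\<^esub> g) ` H = H}"
proof -
  have "\<And>g. g <#\<^bsub>G\<^esub> H #>\<^bsub>G\<^esub> (inv\<^bsub>G\<^esub> g) = (\<lambda>h. g \<otimes>\<^bsub>G\<^esub> h \<otimes>\<^bsub>G\<^esub> inv\<^bsub>G\<^esub> g) ` H"
    unfolding l_coset_def r_coset_def by auto
  then show ?thesis using subgroup.subset[OF assms(2)]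
    unfolding normalizer_def stabilizer_def by auto
qed

lemma sub_hom_img:
  fixes G :: "('a,'m) monoid_scheme"
  assumes G: "group G" and S: "subgroup S G" and T: "subgroup T G"
    and f: "f \<in> hom (G\<lparr>carrier := S\<rparr>) (G\<lparr>carrier := T\<rparr>)" and K: "K \<subseteq> S"
  shows "f ` generate G K = generate G (f ` K)"
proof -
  interpret gh: group_hom "G\<lparr>carrier := S\<rparr>" "G\<lparr>carrier := T\<rparr>" f
    using f group.subgroup_imp_group[OF G S] group.subgroup_imp_group[OF G T]
    by (simp add: group_hom_axioms_def group_hom_def)
  have fX: "f ` K \<subseteq> T" using f K unfolding hom_def by auto
  have "generate (G\<lparr>carrier := T\<rparr>) (f ` K) = f ` generate (G\<lparr>carrier := S\<rparr>) K"
    using gh.generate_img K by simp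
  then show ?thesis
    using group.generate_consistent[OF G K S] group.generate_consistent[OF G fX T] by simp
qed

lemma fs_sub: "fusion_system G F \<Longrightarrow> f \<in> F S T \<Longrightarrow> subgroup S G \<and> subgroup T G"
  unfolding fusion_system_def by blast

lemma fs_inj: "fusion_system G F \<Longrightarrow> f \<in> F S T \<Longrightarrow>
   f \<in> extensional S \<and> f \<in> hom (G\<lparr>carrier := S\<rparr>) (G\<lparr>carrier := T\<rparr>) \<and> inj_on f S"
proof -
  assume a: "fusion_system G F" "f \<in> F S T"
  then have "subgroup S G \<and> subgroup T G" by (rule fs_sub)
  then show ?thesis using a unfolding fusion_system_def inj_homs_def by blast
qed

lemma fs_comp: "fusion_system G F \<Longrightarrow> f \<in> F S T \<Longrightarrow> g \<in> F T R \<Longrightarrow> restrict (g \<circ> f) S \<in> F S R"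
  unfolding fusion_system_def by blast

lemma fs_img: "fusion_system G F \<Longrightarrow> f \<in> F S T \<Longrightarrow> f \<in> F S (f ` S)"
  unfolding fusion_system_def by blast

lemma fs_inv: "fusion_system G F \<Longrightarrow> f \<in> F S T \<Longrightarrow> restrict (inv_into S f) (f ` S) \<in> F (f ` S) S"
  unfolding fusion_system_def by blast

lemma fs_incl:
  fixes G :: "('a,'m) monoid_scheme"
  assumes fs: "fusion_system G F" and G: "group G" and S: "subgroup S G" and T: "subgroup T G"
    and ST: "S \<subseteq> T"
  shows "restrict id S \<in> F S T"
proof -
  have e: "\<one>\<^bsub>G\<^esub> \<otimes>\<^bsub>G\<^esub> z \<otimes>\<^bsub>G\<^esub> inv\<^bsub>G\<^esub> \<one>\<^bsub>G\<^esub> = z" if "z \<in> S" for z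
    using that subgroup.subset[OF S] monoid.inv_one[OF group.is_monoid[OF G]] monoid.l_one[OF group.is_monoid[OF G]]
      monoid.r_one[OF group.is_monoid[OF G]] by auto
  have "conj_map G \<one>\<^bsub>G\<^esub> S \<in> hom_conj G S T"
    unfolding hom_conj_def using ST e monoid.one_closed[OF group.is_monoid[OF G]]
    by (intro CollectI exI[of _ "\<one>\<^bsub>G\<^esub>"]) auto
  moreover have "conj_map G \<one>\<^bsub>G\<^esub> S = restrict id S"
    unfolding conj_map_def using subgroup.subset[OF S] G
    by (intro restrict_ext) (simp add: e)
  moreover have "hom_conj G S T \<subseteq> F S T"
  proof -
    have "\<forall>P Q. subgroup P G \<and> subgroup Q G \<longrightarrow> hom_conj G P Q \<subseteq> F P Q \<and> F P Q \<subseteq> inj_homs G P Q"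
      using fs unfolding fusion_system_def by (elim conjE)
    then show ?thesis using S T by blast
  qed
  ultimately show ?thesis by auto
qed

lemma fs_restrict:
  fixes G :: "('a,'m) monoid_scheme"
  assumes fs: "fusion_system G F" and G: "group G" and f: "f \<in> F S T"
    and K: "subgroup K G" and KS: "K \<subseteq> S"
  shows "restrict f K \<in> F K T"
proof -
  have S: "subgroup S G" using fs_sub[OF fs f] by blast
  have "restrict (f \<circ> restrict id K) K \<in> F K T"
    by (rule fs_comp[OF fs fs_incl[OF fs G K S KS] f])
  moreover have "restrict (f \<circ> restrict id K) K = restrict f K"
    by (intro restrict_ext) auto
  ultimately show ?thesis by simp
qed

lemma sub_hom_mult:
  fixes G :: "('a,'m) monoid_scheme"
  assumes "f \<in> hom (G\<lparr>carrier := S\<rparr>) (G\<lparr>carrier := T\<rparr>)" "a \<in> S" "b \<in> S"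
  shows "f (a \<otimes>\<^bsub>G\<^esub> b) = f a \<otimes>\<^bsub>G\<^esub> f b"
  using assms unfolding hom_def by auto

lemma sub_hom_inv:
  fixes G :: "('a,'m) monoid_scheme"
  assumes G: "group G" and S: "subgroup S G" and T: "subgroup T G"
    and f: "f \<in> hom (G\<lparr>carrier := S\<rparr>) (G\<lparr>carrier := T\<rparr>)" and a: "a \<in> S"
  shows "f (inv\<^bsub>G\<^esub> a) = inv\<^bsub>G\<^esub> (f a)"
proof -
  interpret gh: group_hom "G\<lparr>carrier := S\<rparr>" "G\<lparr>carrier := T\<rparr>" f
    using f group.subgroup_imp_group[OF G S] group.subgroup_imp_group[OF G T]
    by (simp add: group_hom_axioms_def group_hom_def)
  have fa: "f a \<in> T" using f a unfolding hom_def by auto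
  have "f (inv\<^bsub>G\<lparr>carrier := S\<rparr>\<^esub> a) = inv\<^bsub>G\<lparr>carrier := T\<rparr>\<^esub> (f a)"
    using gh.hom_inv a by simp
  then show ?thesis
    using group.m_inv_consistent[OF G S a] group.m_inv_consistent[OF G T fa] by simp
qed

lemma gen_union:
  fixes G :: "('a,'m) monoid_scheme"
  assumes G: "group G" and P: "P \<subseteq> carrier G" and x: "x \<in> carrier G"
  shows "generate G (P \<union> generate G {x}) = generate G (insert x P)"
proof
  have sub: "subgroup (generate G (insert x P)) G"
    using group.generate_is_subgroup[OF G] P x by auto
  have "generate G {x} \<subseteq> generate G (insert x P)"
    using group.mono_generate[OF G] by auto
  moreover have "P \<subseteq> generate G (insert x P)" using generate.incl[of _ "insert x P" G] by blast
  ultimately show "generate G (P \<union> generate G {x}) \<subseteq> generate G (insert x P)"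
    using group.generate_subgroup_incl[OF G _ sub] by auto
next
  have "insert x P \<subseteq> P \<union> generate G {x}" using generate.incl[of x "{x}" G] by blast
  then show "generate G (insert x P) \<subseteq> generate G (P \<union> generate G {x})"
    using group.mono_generate[OF G] by auto
qed

lemma normalizer_transfer:
  fixes G :: "('a,'m) monoid_scheme"
  assumes G: "group G" and P: "subgroup P G" and x: "x \<in> normalizer G P"
    and T: "subgroup T G"
    and f: "f \<in> hom (G\<lparr>carrier := generate G (insert x P)\<rparr>) (G\<lparr>carrier := T\<rparr>)"
    and fixP: "\<forall>z\<in>P. f z = z" and fx: "f x = y"
  shows "y \<in> normalizer G P"
proof -
  note nc = normalizer_char[OF G P]
  have xc: "x \<in> carrier G" using x nc by auto
  have Pc: "P \<subseteq> carrier G" using subgroup.subset[OF P] .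
  let ?S = "generate G (insert x P)"
  have S: "subgroup ?S G" using group.generate_is_subgroup[OF G] Pc xc by auto
  have xS: "x \<in> ?S" using generate.incl[of x "insert x P" G] by blast
  have PS: "P \<subseteq> ?S" using generate.incl[of _ "insert x P" G] by blast
  have yT: "y \<in> T" using f xS fx unfolding hom_def by auto
  have yc: "y \<in> carrier G" using yT subgroup.subset[OF T] by auto
  have conj: "y \<otimes>\<^bsub>G\<^esub> h \<otimes>\<^bsub>G\<^esub> inv\<^bsub>G\<^esub> y = x \<otimes>\<^bsub>G\<^esub> h \<otimes>\<^bsub>G\<^esub> inv\<^bsub>G\<^esub> x" if h: "h \<in> P" for h
  proof -
    have hS: "h \<in> ?S" using h PS by auto
    have ixS: "inv\<^bsub>G\<^esub> x \<in> ?S" using subgroup.m_inv_closed[OF S xS] .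
    have xhS: "x \<otimes>\<^bsub>G\<^esub> h \<in> ?S" using subgroup.m_closed[OF S xS hS] .
    have inP: "x \<otimes>\<^bsub>G\<^esub> h \<otimes>\<^bsub>G\<^esub> inv\<^bsub>G\<^esub> x \<in> P" using x nc h by auto
    have "f (x \<otimes>\<^bsub>G\<^esub> h \<otimes>\<^bsub>G\<^esub> inv\<^bsub>G\<^esub> x) = f x \<otimes>\<^bsub>G\<^esub> f h \<otimes>\<^bsub>G\<^esub> f (inv\<^bsub>G\<^esub> x)"
      using sub_hom_mult[OF f xhS ixS] sub_hom_mult[OF f xS hS] by simp
    also have "\<dots> = y \<otimes>\<^bsub>G\<^esub> h \<otimes>\<^bsub>G\<^esub> inv\<^bsub>G\<^esub> y"
      using sub_hom_inv[OF G S T f xS] fx fixP h by simp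
    finally show ?thesis using fixP inP by simp
  qed
  have "(\<lambda>h. y \<otimes>\<^bsub>G\<^esub> h \<otimes>\<^bsub>G\<^esub> inv\<^bsub>G\<^esub> y) ` P = (\<lambda>h. x \<otimes>\<^bsub>G\<^esub> h \<otimes>\<^bsub>G\<^esub> inv\<^bsub>G\<^esub> x) ` P"
    by (rule image_cong[OF refl conj])
  then show ?thesis using x nc yc by auto
qed

lemma conj_lemma:
  fixes G :: "('a,'m) monoid_scheme"
  assumes fs: "fusion_system G F" and G: "group G" and P: "subgroup P G"
    and x: "x \<in> normalizer G P"
    and psi: "\<psi> \<in> F (generate G (insert x P)) (generate G (insert y P))"
    and fixP: "\<forall>z\<in>P. \<psi> z = z" and px: "\<psi> x = y"
  shows "fusion_conjugate G (normalizer_subsystem G F P) x y"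
proof -
  note nc = normalizer_char[OF G P]
  have Pc: "P \<subseteq> carrier G" using subgroup.subset[OF P] .
  have xc: "x \<in> carrier G" using x nc by auto
  let ?S = "generate G (insert x P)" and ?T = "generate G (insert y P)"
  have ST: "subgroup ?S G \<and> subgroup ?T G" using fs_sub[OF fs psi] .
  have h: "\<psi> \<in> hom (G\<lparr>carrier := ?S\<rparr>) (G\<lparr>carrier := ?T\<rparr>)" using fs_inj[OF fs psi] by blast
  have y: "y \<in> normalizer G P"
    using normalizer_transfer[OF G P x _ h fixP px] ST by blast
  have yc: "y \<in> carrier G" using y nc by auto
  have N: "subgroup (normalizer G P) G" using group.normalizer_imp_subgroup[OF G Pc] .
  have gx: "subgroup (generate G {x}) G" using group.generate_is_subgroup[OF G] xc by auto
  have gy: "subgroup (generate G {y}) G" using group.generate_is_subgroup[OF G] yc by auto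
  have gxS: "generate G {x} \<subseteq> ?S" using group.mono_generate[OF G] by auto
  have f1: "restrict \<psi> (generate G {x}) \<in> F (generate G {x}) ?T"
    by (rule fs_restrict[OF fs G psi gx gxS])
  have img: "restrict \<psi> (generate G {x}) ` generate G {x} = generate G {y}"
  proof -
    have "\<psi> ` generate G {x} = generate G (\<psi> ` {x})"
      using sub_hom_img[OF G _ _ h] ST generate.incl[of x "insert x P" G] by auto
    then show ?thesis using px by simp
  qed
  have f2: "restrict \<psi> (generate G {x}) \<in> F (generate G {x}) (generate G {y})"
    by (metis fs_img[OF fs f1] img)
  have psiP: "\<psi> ` P = P" using fixP by (simp add: image_cong[of P P \<psi> id])
  have psi': "\<psi> \<in> F (generate G (P \<union> generate G {x})) (generate G (P \<union> generate G {y}))"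
    using psi gen_union[OF G Pc xc] gen_union[OF G Pc yc] by simp
  have "restrict \<psi> (generate G {x}) \<in> normalizer_subsystem G F P (generate G {x}) (generate G {y})"
    unfolding normalizer_subsystem_def
  proof (intro CollectI conjI bexI[of _ \<psi>])
    show "generate G {x} \<subseteq> normalizer G P" using group.generate_subgroup_incl[OF G _ N] x by blast
    show "generate G {y} \<subseteq> normalizer G P" using group.generate_subgroup_incl[OF G _ N] y by blast
  qed (use f2 psiP psi' in auto)
  moreover have xg: "x \<in> generate G {x}" by (rule generate.incl) simp
  ultimately show ?thesis unfolding fusion_conjugate_def
  proof (intro bexI[of _ "restrict \<psi> (generate G {x})"] conjI)
    show "restrict \<psi> (generate G {x}) x = y" using xg px by simp
  qed (use img in simp_all)
qed
theorem lemma8p3: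
  fixes p :: nat
    and D :: "'a monoid" and E :: "'b monoid"
    and A :: "'a fusion" and B :: "'b fusion"
    and \<phi> :: "'b \<Rightarrow> 'a" and Q :: "'b set" and P :: "'a set"
    and u :: 'a and v :: 'b and \<alpha> :: "'a \<Rightarrow> 'a" and \<beta> :: "'b \<Rightarrow> 'b"
  assumes satA: "saturated_fusion_system p D A"
    and satB: "saturated_fusion_system p E B"
    and iso: "\<phi> \<in> iso E D"
    and ind: "induces_fusion_iso E D \<phi> B A"
    and Q: "subgroup Q E"
    and P: "P = \<phi> ` Q"
    and u: "u \<in> normalizer D P"
    and v: "v \<in> normalizer E Q"
    and \<alpha>: "\<alpha> \<in> A (generate D (insert u P)) (\<alpha> ` generate D (insert u P))"
    and \<beta>: "\<beta> \<in> B (generate E (insert v Q)) (\<beta> ` generate E (insert v Q))"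
    and res: "\<forall>x\<in>P. \<alpha> x = \<phi> (\<beta> (inv_into (carrier E) \<phi> x))"
    and uv: "\<alpha> u = \<phi> (\<beta> v)"
  shows "(\<exists>\<psi> \<in> A (generate D (insert u P)) (generate D (insert (\<phi> v) P)).
            \<psi> ` generate D (insert u P) = generate D (insert (\<phi> v) P) \<and>
            (\<forall>x\<in>P. \<psi> x = x) \<and> \<psi> u = \<phi> v)
       \<and> fusion_conjugate D (normalizer_subsystem D A P) u (\<phi> v)
       \<and> (\<exists>\<omega> \<in> B (generate E (insert v Q)) (generate E (insert (inv_into (carrier E) \<phi> u) Q)).
            \<omega> ` generate E (insert v Q) = generate E (insert (inv_into (carrier E) \<phi> u) Q) \<and>
            (\<forall>x\<in>Q. \<omega> x = x) \<and> \<omega> v = inv_into (carrier E) \<phi> u)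
       \<and> fusion_conjugate E (normalizer_subsystem E B Q) v (inv_into (carrier E) \<phi> u)"
proof -
  have GD: "group D" using satA unfolding saturated_fusion_system_def finite_p_group_def by blast
  have GE: "group E" using satB unfolding saturated_fusion_system_def finite_p_group_def by blast
  have fsA: "fusion_system D A" using satA unfolding saturated_fusion_system_def by blast
  have fsB: "fusion_system E B" using satB unfolding saturated_fusion_system_def by blast
  have phom: "\<phi> \<in> hom E D" and pbij: "bij_betw \<phi> (carrier E) (carrier D)"
    using iso unfolding iso_def by auto
  interpret gh: group_hom E D \<phi> using GE GD phom by (simp add: group_hom_axioms_def group_hom_def)
  have pinj: "inj_on \<phi> (carrier E)" and pimg: "\<phi> ` carrier E = carrier D"
    using pbij unfolding bij_betw_def by auto
  have indA: "\<And>R S. subgroup R E \<Longrightarrow> subgroup S E \<Longrightarrow> A (\<phi> ` R) (\<phi> ` S) =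
          {restrict (\<phi> \<circ> f \<circ> inv_into (carrier E) \<phi>) (\<phi> ` R) | f. f \<in> B R S}"
    using ind unfolding induces_fusion_iso_def by blast
  have Qc: "Q \<subseteq> carrier E" using subgroup.subset[OF Q] .
  have PD: "subgroup P D" using gh.subgroup_img_is_subgroup[OF Q] P by simp
  have Pc: "P \<subseteq> carrier D" using subgroup.subset[OF PD] .
  have vc: "v \<in> carrier E" using v normalizer_char[OF GE Q] by auto
  have uc: "u \<in> carrier D" using u normalizer_char[OF GD PD] by auto
  have invphi: "\<And>y. y \<in> carrier E \<Longrightarrow> inv_into (carrier E) \<phi> (\<phi> y) = y"
    using pinj by (simp add: inv_into_f_f)
  let ?Rv = "generate E (insert v Q)"
  let ?T = "generate D (insert (\<phi> v) P)"
  let ?RD = "generate D (insert u P)"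
  have Rv: "subgroup ?Rv E" using group.generate_is_subgroup[OF GE] Qc vc by auto
  have Rvc: "?Rv \<subseteq> carrier E" using subgroup.subset[OF Rv] .
  have QRv: "Q \<subseteq> ?Rv" and vRv: "v \<in> ?Rv" using generate.incl[of _ "insert v Q" E] by blast+
  have phiRv: "\<phi> ` ?Rv = ?T"
    using gh.generate_img[of "insert v Q"] Qc vc P by simp
  let ?Sb = "\<beta> ` ?Rv"
  have Sb: "subgroup ?Sb E" using fs_sub[OF fsB \<beta>] by blast
  have bhom: "\<beta> \<in> hom (E\<lparr>carrier := ?Rv\<rparr>) (E\<lparr>carrier := ?Sb\<rparr>)" using fs_inj[OF fsB \<beta>] by blast
  define b' where "b' = restrict (\<phi> \<circ> \<beta> \<circ> inv_into (carrier E) \<phi>) ?T"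
  have b'A: "b' \<in> A ?T (\<phi> ` ?Sb)"
    using indA[OF Rv Sb] \<beta> phiRv unfolding b'_def by auto
  have b'val: "b' (\<phi> y) = \<phi> (\<beta> y)" if "y \<in> ?Rv" for y
  proof -
    have "\<phi> y \<in> ?T" using that phiRv by blast
    then show ?thesis unfolding b'_def using invphi that Rvc by auto
  qed
  have b'img: "b' ` ?T = \<phi> ` ?Sb"
  proof -
    have "b' ` ?T = b' ` \<phi> ` ?Rv" using phiRv by simp
    also have "\<dots> = (\<lambda>y. \<phi> (\<beta> y)) ` ?Rv" unfolding image_image using b'val by (rule image_cong[OF refl])
    finally show ?thesis by (simp add: image_image)
  qed
  have b'inj: "inj_on b' ?T" using fs_inj[OF fsA b'A] by blast
  have RDsub: "subgroup ?RD D \<and> subgroup (\<alpha> ` ?RD) D" using fs_sub[OF fsA \<alpha>] .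
  have ahom: "\<alpha> \<in> hom (D\<lparr>carrier := ?RD\<rparr>) (D\<lparr>carrier := \<alpha> ` ?RD\<rparr>)" using fs_inj[OF fsA \<alpha>] by blast
  have aP: "\<alpha> ` P = \<phi> ` \<beta> ` Q"
  proof -
    have "\<alpha> ` P = (\<lambda>q. \<phi> (\<beta> q)) ` Q"
      unfolding P image_image using res P invphi Qc by (intro image_cong) auto
    then show ?thesis by (simp add: image_image)
  qed
  have bQc: "\<beta> ` insert v Q \<subseteq> carrier E" using bhom QRv vRv subgroup.subset[OF Sb] by blast
  have aimg: "\<alpha> ` ?RD = \<phi> ` ?Sb"
  proof -
    have "\<alpha> ` ?RD = generate D (\<alpha> ` insert u P)"
      using sub_hom_img[OF GD _ _ ahom] RDsub generate.incl[of _ "insert u P" D] by blast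
    also have "\<dots> = generate D (\<phi> ` \<beta> ` insert v Q)" using aP uv by simp
    also have "\<dots> = \<phi> ` generate E (\<beta> ` insert v Q)" using gh.generate_img[OF bQc] .
    also have "generate E (\<beta> ` insert v Q) = ?Sb"
      using sub_hom_img[OF GE Rv Sb bhom] QRv vRv by (metis insert_subset)
    finally show ?thesis .
  qed
  define binv where "binv = restrict (inv_into ?T b') (b' ` ?T)"
  have binvA: "binv \<in> A (\<phi> ` ?Sb) ?T" using fs_inv[OF fsA b'A] b'img unfolding binv_def by simp
  have aA: "\<alpha> \<in> A ?RD (\<phi> ` ?Sb)" using \<alpha> aimg by simp
  define \<psi> where "\<psi> = restrict (binv \<circ> \<alpha>) ?RD"
  have psiA: "\<psi> \<in> A ?RD ?T" unfolding \<psi>_def by (rule fs_comp[OF fsA aA binvA])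
  have psival: "\<psi> z = inv_into ?T b' (\<alpha> z)" if "z \<in> ?RD" for z
    using that aimg b'img unfolding \<psi>_def binv_def by auto
  have Tc: "\<phi> ` Q \<subseteq> ?T" "\<phi> v \<in> ?T" using phiRv QRv vRv by blast+
  have psiP: "\<forall>x\<in>P. \<psi> x = x"
  proof
    fix x assume x: "x \<in> P"
    then obtain q where q: "q \<in> Q" "x = \<phi> q" using P by auto
    have "x \<in> ?RD" by (rule generate.incl) (simp add: x)
    then have "\<psi> x = inv_into ?T b' (\<alpha> x)" by (rule psival)
    also have "\<alpha> x = b' (\<phi> q)"
    proof -
      have e1: "\<alpha> x = \<phi> (\<beta> q)" using res x q invphi[of q] Qc by auto
      have e2: "b' (\<phi> q) = \<phi> (\<beta> q)" using b'val QRv q(1) by blast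
      show ?thesis using e1 e2 by simp
    qed
    finally have "\<psi> x = inv_into ?T b' (b' (\<phi> q))" .
    moreover have "\<phi> q \<in> ?T" using Tc q(1) by blast
    ultimately show "\<psi> x = x" using inv_into_f_f[OF b'inj, of "\<phi> q"] q(2) by simp
  qed
  have uRD: "u \<in> ?RD" using generate.incl[of _ "insert u P" D] by blast
  have psiu: "\<psi> u = \<phi> v"
    using psival[OF uRD] uv b'val[OF vRv] inv_into_f_f[OF b'inj Tc(2)] by simp
  have psiimg: "\<psi> ` ?RD = ?T"
  proof -
    have "\<psi> ` ?RD = inv_into ?T b' ` \<alpha> ` ?RD" unfolding image_image using psival by simp
    also have "\<dots> = ?T" using aimg b'img inv_into_image_cancel[OF b'inj order_refl] by simp
    finally show ?thesis .
  qed
  have part1: "\<exists>\<psi> \<in> A ?RD ?T. \<psi> ` ?RD = ?T \<and> (\<forall>x\<in>P. \<psi> x = x) \<and> \<psi> u = \<phi> v"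
    by (intro bexI[of _ \<psi>] conjI psiA psiimg psiP psiu)
  have conj1: "fusion_conjugate D (normalizer_subsystem D A P) u (\<phi> v)"
    by (rule conj_lemma[OF fsA GD PD u psiA psiP psiu])
  let ?u' = "inv_into (carrier E) \<phi> u"
  have u'c: "?u' \<in> carrier E" using uc pimg by (metis inv_into_into)
  have pu': "\<phi> ?u' = u" using uc pimg by (simp add: f_inv_into_f)
  let ?Ru = "generate E (insert ?u' Q)"
  have Ru: "subgroup ?Ru E" using group.generate_is_subgroup[OF GE] Qc u'c by auto
  have Ruc: "?Ru \<subseteq> carrier E" using subgroup.subset[OF Ru] .
  have phiRu: "\<phi> ` ?Ru = ?RD"
    using gh.generate_img[of "insert ?u' Q"] Qc u'c P pu' by simp
  define pinv where "pinv = restrict (inv_into ?RD \<psi>) (\<psi> ` ?RD)"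
  have pinvA: "pinv \<in> A (\<phi> ` ?Rv) (\<phi> ` ?Ru)"
    using fs_inv[OF fsA psiA] psiimg phiRv phiRu unfolding pinv_def by simp
  then obtain \<omega> where om: "\<omega> \<in> B ?Rv ?Ru"
    and pinv_eq: "pinv = restrict (\<phi> \<circ> \<omega> \<circ> inv_into (carrier E) \<phi>) (\<phi> ` ?Rv)"
    using indA[OF Rv Ru] by auto
  have omhom: "\<omega> \<in> hom (E\<lparr>carrier := ?Rv\<rparr>) (E\<lparr>carrier := ?Ru\<rparr>)" using fs_inj[OF fsB om] by blast
  have omc: "\<omega> y \<in> carrier E" if "y \<in> ?Rv" for y using omhom that Ruc unfolding hom_def by auto
  have omval: "\<phi> (\<omega> y) = pinv (\<phi> y)" if "y \<in> ?Rv" for y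
    using that pinv_eq invphi Rvc by auto
  have psiinj: "inj_on \<psi> ?RD" using fs_inj[OF fsA psiA] by blast
  have pinvpsi: "pinv (\<psi> z) = z" if "z \<in> ?RD" for z
    using that inv_into_f_f[OF psiinj that] unfolding pinv_def by simp
  have omQ: "\<forall>x\<in>Q. \<omega> x = x"
  proof
    fix q assume q: "q \<in> Q"
    have pq: "\<phi> q \<in> P" using q by (simp add: P)
    have "\<phi> q \<in> ?RD" by (rule generate.incl) (simp add: pq)
    then have a3: "pinv (\<psi> (\<phi> q)) = \<phi> q" by (rule pinvpsi)
    have qRv: "q \<in> ?Rv" using QRv q by (rule subsetD)
    have a1: "\<phi> (\<omega> q) = pinv (\<phi> q)" by (rule omval[OF qRv])
    have a2: "\<psi> (\<phi> q) = \<phi> q" by (rule bspec[OF psiP pq])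
    have "\<phi> (\<omega> q) = \<phi> q" using a1 a2 a3 by simp
    then show "\<omega> q = q" by (rule inj_onD[OF pinj]) (use omc[OF qRv] q Qc in auto)
  qed
  have omv: "\<omega> v = ?u'"
  proof -
    have "\<phi> (\<omega> v) = u" using omval[OF vRv] psiu pinvpsi[OF uRD] by simp
    then show ?thesis using invphi[OF omc[OF vRv]] by simp
  qed
  have omimg: "\<omega> ` ?Rv = ?Ru"
  proof -
    have "\<phi> ` \<omega> ` ?Rv = pinv ` \<phi> ` ?Rv" unfolding image_image using omval by simp
    also have "\<dots> = ?RD" unfolding phiRv psiimg[symmetric] pinv_def
      using inv_into_image_cancel[OF psiinj order_refl] by simp
    finally have eq: "\<phi> ` \<omega> ` ?Rv = \<phi> ` ?Ru" using phiRu by simp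
    have s1: "\<omega> ` ?Rv \<subseteq> carrier E" by (rule image_subsetI) (rule omc)
    show ?thesis using inj_on_image_eq_iff[OF pinj s1 Ruc] eq by simp
  qed
  have part2: "\<exists>\<omega> \<in> B ?Rv ?Ru. \<omega> ` ?Rv = ?Ru \<and> (\<forall>x\<in>Q. \<omega> x = x) \<and> \<omega> v = ?u'"
    by (intro bexI[of _ \<omega>] conjI omimg omQ omv om)
  have conj2: "fusion_conjugate E (normalizer_subsystem E B Q) v ?u'"
    by (rule conj_lemma[OF fsB GE Q v om omQ omv])
  show ?thesis by (intro conjI part1 conj1 part2 conj2)
qed
end
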